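(* Let $r\geq 2$ and let $E$ be the set of idempotents of the free inverse monoid $\mathrm{FIM}_r$ of rank $r$. Then the exponential growth rate of the idempotents is \[\limsup_{K\to\infty}|S(K)\cap E|^{1/K}=\lim_{k\to\infty}|S(2k)\cap E|^{1/(2k)}=\left(\frac{2r-1}{2r-2}\right)^{r-1}\sqrt{2r-1}.\] Moreover, the ratio of this growth rate to $\sqrt{e(2r-1)}$ tends to $1$ as $r\to\infty$.
   Context: $\mathrm{FIM}_r$ is the free inverse monoid on a set $X$ with $|X|=r$. It is generated as a monoid by $X\cup X^{-1}$, where $X^{-1}$ is a disjoint copy of $X$ consisting of formal inverses. The length of an element is the minimal length of a word over $X\cup X^{-1}$ representing it. $S(K)$ is the set of elements of length exactly $K$. An idempotent is an element $e$ with $e^2=e$. In Munn's model these are exactly the pairs $(T,1)$, and $S(K)\cap E$ is empty when $K$ is odd. *)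

theory Defs
  imports "HOL-Analysis.Analysis"
begin

text \<open>Generators of FIM_r: X = {0..<r}. A letter is (i, False) for the generator x_i
  and (i, True) for its formal inverse x_i^{-1}. Words are lists of letters.\<close>

type_synonym letter = "nat \<times> bool"

definition words :: "nat \<Rightarrow> letter list set" where
  "words r = {w. \<forall>l \<in> set w. fst l < r}"

definition winv :: "letter list \<Rightarrow> letter list" where
  "winv w = rev (map (\<lambda>(i, b). (i, \<not> b)) w)"

inductive wag :: "letter list \<Rightarrow> letter list \<Rightarrow> bool" where
  wag_refl: "wag w w"
| wag_sym: "wag u v \<Longrightarrow> wag v u"
| wag_trans: "wag u v \<Longrightarrow> wag v w \<Longrightarrow> wag u w"
| wag_cong: "wag u v \<Longrightarrow> wag (p @ u @ q) (p @ v @ q)"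
| wag_inv: "wag (w @ winv w @ w) w"
| wag_comm: "wag (u @ winv u @ v @ winv v) (v @ winv v @ u @ winv u)"

text \<open>The element of FIM_r represented by a word (as its equivalence class of words over X \<union> X^{-1}).\<close>

definition fim_elem :: "nat \<Rightarrow> letter list \<Rightarrow> letter list set" where
  "fim_elem r w = {v \<in> words r. wag v w}"

definition FIM :: "nat \<Rightarrow> letter list set set" where
  "FIM r = fim_elem r ` words r"

definition fim_length :: "letter list set \<Rightarrow> nat" where
  "fim_length c = (LEAST n. \<exists>v \<in> c. length v = n)"

definition fim_idem :: "nat \<Rightarrow> letter list set \<Rightarrow> bool" where
  "fim_idem r c = (\<exists>w \<in> words r. c = fim_elem r w \<and> fim_elem r (w @ w) = c)"

definition idem_count :: "nat \<Rightarrow> nat \<Rightarrow> nat" where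
  "idem_count r K = card {c \<in> FIM r. fim_length c = K \<and> fim_idem r c}"

definition idem_growth :: "nat \<Rightarrow> real" where
  "idem_growth r = ((2 * real r - 1) / (2 * real r - 2)) ^ (r - 1) * sqrt (2 * real r - 1)"

end

theory Submission
  imports Defs
begin


definition flip :: "letter \<Rightarrow> letter" where "flip l = (fst l, \<not> snd l)"

lemma flip_flip[simp]: "flip (flip x) = x" by (simp add: flip_def)
lemma flip_neq[simp]: "flip x \<noteq> x" "x \<noteq> flip x" by (auto simp: flip_def prod_eq_iff)
lemma fst_flip[simp]: "fst (flip x) = fst x" by (simp add: flip_def)

lemma winv_alt: "winv w = rev (map flip w)"
  by (simp add: winv_def flip_def case_prod_unfold)
lemma winv_Nil[simp]: "winv [] = []" by (simp add: winv_alt)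
lemma winv_append[simp]: "winv (a @ b) = winv b @ winv a" by (simp add: winv_alt)
lemma winv_single[simp]: "winv [x] = [flip x]" by (simp add: winv_alt)
lemma winv_winv[simp]: "winv (winv a) = a" by (simp add: winv_alt rev_map comp_def)
lemma length_winv[simp]: "length (winv a) = length a" by (simp add: winv_alt)

definition stp :: "letter list \<Rightarrow> letter \<Rightarrow> letter list" where
  "stp s x = (if s \<noteq> [] \<and> last s = flip x then butlast s else s @ [x])"

definition red :: "letter list \<Rightarrow> letter list" where
  "red w = foldl stp [] w"

fun reduced :: "letter list \<Rightarrow> bool" where
  "reduced (x # y # s) = (y \<noteq> flip x \<and> reduced (y # s))"
| "reduced _ = True"

lemma reduced_snoc: "reduced (s @ [x]) \<longleftrightarrow> reduced s \<and> (s \<noteq> [] \<longrightarrow> x \<noteq> flip (last s))"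
  by (induction s rule: reduced.induct) auto

lemma reduced_butlast: "reduced s \<Longrightarrow> reduced (butlast s)"
  by (cases s rule: rev_cases) (auto simp: reduced_snoc)

lemma reduced_stp: "reduced s \<Longrightarrow> reduced (stp s x)"
  by (auto simp: stp_def reduced_snoc reduced_butlast)

lemma reduced_foldl: "reduced s \<Longrightarrow> reduced (foldl stp s w)"
  by (induction w arbitrary: s) (auto simp: reduced_stp)

lemma reduced_red: "reduced (red w)"
  unfolding red_def by (rule reduced_foldl) simp

lemma red_Nil[simp]: "red [] = []" by (simp add: red_def)
lemma red_snoc: "red (w @ [x]) = stp (red w) x" by (simp add: red_def)
lemma red_append_foldl: "red (a @ b) = foldl stp (red a) b" by (simp add: red_def)

lemma red_reduced: "reduced s \<Longrightarrow> red s = s"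
proof (induction s rule: rev_induct)
  case Nil then show ?case by simp
next
  case (snoc x s)
  then show ?case by (auto simp: red_snoc reduced_snoc stp_def)
qed

lemma red_red[simp]: "red (red w) = red w"
  by (rule red_reduced[OF reduced_red])

lemma stp_stp: "reduced t \<Longrightarrow> stp (stp t y) (flip y) = t"
proof (cases "t \<noteq> [] \<and> last t = flip y")
  case True
  assume r: "reduced t"
  then obtain t' where t: "t = t' @ [flip y]" using True by (cases t rule: rev_cases) auto
  have "\<not> (t' \<noteq> [] \<and> last t' = y)" using r t by (auto simp: reduced_snoc)
  then show ?thesis using True t by (auto simp: stp_def)
next
  case False
  then show ?thesis by (auto simp: stp_def)
qed

lemma foldl_red: "reduced s \<Longrightarrow> foldl stp s b = foldl stp s (red b)"
proof (induction b rule: rev_induct)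
  case Nil then show ?case by simp
next
  case (snoc x b)
  have IH: "foldl stp s b = foldl stp s (red b)" using snoc by simp
  show ?case
  proof (cases "red b \<noteq> [] \<and> last (red b) = flip x")
    case True
    then obtain c where c: "red b = c @ [flip x]" by (cases "red b" rule: rev_cases) auto
    have "foldl stp s (red (b @ [x])) = foldl stp s c"
      using c by (simp add: red_snoc stp_def)
    moreover have "foldl stp s (b @ [x]) = stp (stp (foldl stp s c) (flip x)) x"
      using IH c by simp
    moreover have "stp (stp (foldl stp s c) (flip x)) x = foldl stp s c"
      using stp_stp[OF reduced_foldl[OF snoc.prems], of c "flip x"] by simp
    ultimately show ?thesis by simp
  next
    case False
    then have "red (b @ [x]) = red b @ [x]" by (auto simp: red_snoc stp_def)
    then show ?thesis using IH by simp
  qed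
qed

lemma red_append: "red (a @ b) = red (red a @ red b)"
proof -
  have "red (a @ b) = foldl stp (red a) (red b)"
    by (simp add: red_append_foldl foldl_red[OF reduced_red, of a b])
  also have "\<dots> = red (red a @ red b)" by (simp add: red_append_foldl)
  finally show ?thesis .
qed

lemma red_append_left: "red (a @ b) = red (red a @ b)"
  by (simp add: red_append_foldl)

lemma red_append_right: "red (a @ b) = red (a @ red b)"
proof -
  have "red (a @ red b) = red (red a @ red (red b))" by (rule red_append)
  then show ?thesis by (simp add: red_append[of a b])
qed

lemma red_winv: "red (w @ winv w) = []"
proof (induction w rule: rev_induct)
  case Nil then show ?case by simp
next
  case (snoc x w)
  have "red ((w @ [x]) @ winv (w @ [x])) = foldl stp (stp (stp (red w) x) (flip x)) (winv w)"
    by (simp add: red_append_foldl red_snoc)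
  also have "\<dots> = foldl stp (red w) (winv w)"
    using stp_stp[OF reduced_red, of w x] by simp
  also have "\<dots> = []" using snoc by (simp add: red_append_foldl)
  finally show ?case .
qed

lemma red_winv2: "red (winv w @ w) = []"
  using red_winv[of "winv w"] by simp



definition tree :: "letter list \<Rightarrow> letter list set" where
  "tree w = (\<lambda>i. red (take i w)) ` {0..length w}"

lemma finite_tree[simp]: "finite (tree w)" by (simp add: tree_def)

lemma Nil_in_tree[simp]: "[] \<in> tree w"
  unfolding tree_def by (rule image_eqI[of _ _ 0]) auto

lemma red_in_tree[simp]: "red w \<in> tree w"
  unfolding tree_def by (rule image_eqI[of _ _ "length w"]) auto

lemma tree_reduced: "s \<in> tree w \<Longrightarrow> red s = s"
  by (auto simp: tree_def)

lemma tree_snoc: "tree (w @ [x]) = insert (red (w @ [x])) (tree w)"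
proof -
  have "{0..length (w @ [x])} = insert (Suc (length w)) {0..length w}" by auto
  then show ?thesis
    by (auto simp: tree_def intro!: image_cong)
qed

lemma tree_append: "tree (u @ v) = tree u \<union> (\<lambda>s. red (u @ s)) ` tree v"
proof -
  have "tree (u @ v) = (\<lambda>i. red (take i (u @ v))) ` ({0..length u} \<union> (\<lambda>j. length u + j) ` {0..length v})"
    unfolding tree_def by (intro arg_cong[where f="image _"]) (auto simp: image_iff intro: exI[of _ "_ - length u"])
  also have "\<dots> = (\<lambda>i. red (take i (u @ v))) ` {0..length u} \<union> (\<lambda>j. red (take (length u + j) (u @ v))) ` {0..length v}"
    by (simp only: image_Un image_image)
  also have "\<dots> = tree u \<union> (\<lambda>j. red (u @ take j v)) ` {0..length v}"
    unfolding tree_def by (intro arg_cong2[where f="(\<union>)"] image_cong) auto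
  also have "(\<lambda>j. red (u @ take j v)) ` {0..length v} = (\<lambda>s. red (u @ s)) ` tree v"
    by (auto simp: tree_def image_image red_append_right[of u "take _ v"])
  finally show ?thesis .
qed

lemma tree_winv: "tree (w @ winv w) = tree w"
proof -
  have "(\<lambda>s. red (w @ s)) ` tree (winv w) \<subseteq> tree w"
  proof
    fix t assume "t \<in> (\<lambda>s. red (w @ s)) ` tree (winv w)"
    then obtain j where j: "j \<le> length w" "t = red (w @ red (take j (winv w)))"
      by (auto simp: tree_def)
    define i where "i = length w - j"
    have tk: "take j (winv w) = winv (drop i w)"
      using j by (simp add: winv_alt i_def take_rev take_map drop_map)
    have "t = red (w @ winv (drop i w))" using j tk red_append_right by metis
    also have "\<dots> = red (take i w @ (drop i w @ winv (drop i w)))"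
      by (metis append.assoc append_take_drop_id)
    also have "\<dots> = red (take i w)"
      by (metis red_append_right red_winv append_Nil2 red_red)
    finally show "t \<in> tree w" using j unfolding tree_def i_def by auto
  qed
  then show ?thesis by (auto simp: tree_append)
qed

lemma tree_take_mono: "tree (take i w) \<subseteq> tree w"
  by (auto simp: tree_def min_def intro!: image_eqI)

lemma take_red_in_tree: "take k (red w) \<in> tree w"
proof (induction w arbitrary: k rule: rev_induct)
  case Nil then show ?case by simp
next
  case (snoc x w)
  show ?case
  proof (cases "red w \<noteq> [] \<and> last (red w) = flip x")
    case True
    then have "red (w @ [x]) = take (length (red w) - 1) (red w)"
      by (simp add: red_snoc stp_def butlast_conv_take)
    then have "take k (red (w @ [x])) = take (min k (length (red w) - 1)) (red w)"
      by (simp add: min_def)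
    then show ?thesis using snoc[of "min k (length (red w) - 1)"] by (simp add: tree_snoc)
  next
    case False
    then have e: "red (w @ [x]) = red w @ [x]" by (auto simp: red_snoc stp_def)
    show ?thesis
    proof (cases "k \<le> length (red w)")
      case True
      then show ?thesis using snoc[of k] e by (simp add: tree_snoc)
    next
      case False
      then have "take k (red (w @ [x])) = red (w @ [x])" using e by simp
      then show ?thesis by (simp add: tree_snoc)
    qed
  qed
qed

lemma tree_prefix: "t \<in> tree w \<Longrightarrow> take k t \<in> tree w"
  using take_red_in_tree tree_take_mono unfolding tree_def by blast

lemma wag_invariant: "wag u v \<Longrightarrow> red u = red v \<and> tree u = tree v"
proof (induction rule: wag.induct)
  case (wag_refl w) then show ?case by simp
next
  case (wag_sym u v) then show ?case by simp
next
  case (wag_trans u v w) then show ?case by simp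
next
  case (wag_cong u v p q)
  have r: "red (p @ u @ q) = red (p @ red (red u @ q))"
    by (metis red_append_left red_append_right)
  have r2: "red (p @ v @ q) = red (p @ red (red v @ q))"
    by (metis red_append_left red_append_right)
  have t: "tree (p @ u @ q) = tree p \<union> (\<lambda>s. red (p @ s)) ` (tree u \<union> (\<lambda>s. red (red u @ s)) ` tree q)"
    by (simp add: tree_append red_append_left[of u])
  have t2: "tree (p @ v @ q) = tree p \<union> (\<lambda>s. red (p @ s)) ` (tree v \<union> (\<lambda>s. red (red v @ s)) ` tree q)"
    by (simp add: tree_append red_append_left[of v])
  show ?case using wag_cong.IH r r2 t t2 by simp
next
  case (wag_inv w)
  have r: "red (w @ winv w @ w) = red w"
    by (metis append.assoc append_Nil red_append_left red_winv)
  have "(\<lambda>s. red (w @ s)) ` tree (winv w @ w) \<subseteq> tree w"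
  proof -
    have "tree (winv w @ w) = tree (winv w) \<union> (\<lambda>s. red (winv w @ s)) ` tree w"
      by (rule tree_append)
    moreover have "(\<lambda>s. red (w @ s)) ` tree (winv w) \<subseteq> tree w"
      using tree_winv[of w] tree_append[of w "winv w"] by auto
    moreover have "red (w @ red (winv w @ s)) = s" if "s \<in> tree w" for s
    proof -
      have "red (w @ red (winv w @ s)) = red (red (w @ winv w) @ s)"
        by (metis append.assoc red_append_left red_append_right)
      then show ?thesis using red_winv[of w] tree_reduced[OF that] by simp
    qed
    ultimately show ?thesis by auto
  qed
  then have "tree (w @ winv w @ w) = tree w" by (auto simp: tree_append)
  then show ?case using r by simp
next
  case (wag_comm u v)
  have r: "red (u @ winv u @ v @ winv v) = []"
    by (metis append.assoc append_Nil red_append_left red_winv)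
  have r': "red (v @ winv v @ u @ winv u) = []"
    by (metis append.assoc append_Nil red_append_left red_winv)
  have t: "tree (a @ winv a @ b @ winv b) = tree a \<union> tree b" for a b
  proof -
    have "tree ((a @ winv a) @ (b @ winv b)) = tree (a @ winv a) \<union> (\<lambda>s. red ((a @ winv a) @ s)) ` tree (b @ winv b)"
      by (rule tree_append)
    also have "\<dots> = tree a \<union> (\<lambda>s. red (red (a @ winv a) @ s)) ` tree b"
      by (simp only: tree_winv red_append_left[of "a @ winv a"])
    also have "\<dots> = tree a \<union> (\<lambda>s. s) ` tree b"
      using tree_reduced by (intro arg_cong2[where f="(\<union>)"] image_cong) (auto simp: red_winv)
    also have "\<dots> = tree a \<union> tree b" by simp
    finally show ?thesis by simp
  qed
  show ?case using r r' t[of u v] t[of v u] by auto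
qed



lemma wag_app: "wag a b \<Longrightarrow> wag c d \<Longrightarrow> wag (a @ c) (b @ d)"
proof -
  assume 1: "wag a b" and 2: "wag c d"
  have "wag ([] @ a @ c) ([] @ b @ c)" by (rule wag_cong[OF 1])
  moreover have "wag (b @ c @ []) (b @ d @ [])" by (rule wag_cong[OF 2])
  ultimately show ?thesis by (auto intro: wag_trans)
qed

lemma wag_appL: "wag c d \<Longrightarrow> wag (a @ c) (a @ d)"
  by (rule wag_app[OF wag_refl])
lemma wag_appR: "wag a b \<Longrightarrow> wag (a @ c) (b @ c)"
  by (rule wag_app[OF _ wag_refl])

definition ee :: "letter list \<Rightarrow> letter list" where "ee p = p @ winv p"

lemma ee_comm: "wag (ee p @ ee q) (ee q @ ee p)"
  using wag_comm[of p q] by (simp add: ee_def)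

lemma ee_idem: "wag (ee p @ ee p) (ee p)"
proof -
  have "wag ((p @ winv p @ p) @ winv p) (p @ winv p)" by (rule wag_appR[OF wag_inv])
  then show ?thesis by (simp add: ee_def)
qed

definition prodE :: "letter list list \<Rightarrow> letter list" where
  "prodE L = concat (map ee L)"

lemma prodE_Nil[simp]: "prodE [] = []" and prodE_Cons[simp]: "prodE (p # L) = ee p @ prodE L"
  and prodE_append[simp]: "prodE (L @ M) = prodE L @ prodE M"
  by (simp_all add: prodE_def)

lemma wag_trans3: "wag a b \<Longrightarrow> wag b c \<Longrightarrow> wag c d \<Longrightarrow> wag a d"
  by (meson wag_trans)

lemma P1: "wag (ee p @ prodE L) (prodE L @ ee p)"
proof (induction L)
  case Nil then show ?case by (simp add: wag_refl)
next
  case (Cons q L)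
  have "wag (ee p @ ee q @ prodE L) (ee q @ ee p @ prodE L)"
    using wag_appR[OF ee_comm[of p q], of "prodE L"] by simp
  moreover have "wag (ee q @ ee p @ prodE L) (ee q @ prodE L @ ee p)"
    by (rule wag_appL[OF Cons.IH])
  ultimately show ?case by (auto intro: wag_trans)
qed

lemma P2: "p \<in> set L \<Longrightarrow> wag (ee p @ prodE L) (prodE L)"
proof (induction L)
  case Nil then show ?case by simp
next
  case (Cons q L)
  show ?case
  proof (cases "p = q")
    case True
    then show ?thesis using wag_appR[OF ee_idem[of p], of "prodE L"] by simp
  next
    case False
    then have "p \<in> set L" using Cons by simp
    have "wag (ee p @ ee q @ prodE L) (ee q @ ee p @ prodE L)"
      using wag_appR[OF ee_comm[of p q], of "prodE L"] by simp
    moreover have "wag (ee q @ ee p @ prodE L) (ee q @ prodE L)"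
      by (rule wag_appL[OF Cons.IH[OF \<open>p \<in> set L\<close>]])
    ultimately show ?thesis by (auto intro: wag_trans)
  qed
qed

lemma P3: "set L \<subseteq> set M \<Longrightarrow> wag (prodE L @ prodE M) (prodE M)"
proof (induction L)
  case Nil then show ?case by (simp add: wag_refl)
next
  case (Cons p L)
  have "wag (ee p @ prodE L @ prodE M) (ee p @ prodE M)"
    using Cons by (auto intro: wag_appL)
  moreover have "wag (ee p @ prodE M) (prodE M)" using Cons.prems by (auto intro: P2)
  ultimately show ?case by (auto intro: wag_trans)
qed

lemma P4: "wag (prodE L @ prodE M) (prodE M @ prodE L)"
proof (induction L)
  case Nil then show ?case by (simp add: wag_refl)
next
  case (Cons p L)
  have "wag (ee p @ prodE L @ prodE M) (ee p @ prodE M @ prodE L)"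
    by (rule wag_appL[OF Cons.IH])
  moreover have "wag (ee p @ prodE M @ prodE L) (prodE M @ ee p @ prodE L)"
    using wag_appR[OF P1[of p M], of "prodE L"] by simp
  ultimately show ?case by (auto intro: wag_trans)
qed

lemma P5: "set L = set M \<Longrightarrow> wag (prodE L) (prodE M)"
proof -
  assume e: "set L = set M"
  have "wag (prodE L) (prodE M @ prodE L)" using P3[of M L] e by (auto intro: wag_sym)
  moreover have "wag (prodE M @ prodE L) (prodE L @ prodE M)" by (rule P4)
  moreover have "wag (prodE L @ prodE M) (prodE M)" using P3[of L M] e by auto
  ultimately show ?thesis by (auto intro: wag_trans)
qed

definition prefs :: "letter list \<Rightarrow> letter list list" where
  "prefs w = map (\<lambda>i. red (take i w)) [0..<Suc (length w)]"

lemma set_prefs: "set (prefs w) = tree w"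
  by (simp only: prefs_def tree_def set_map set_upt atLeastLessThanSuc_atLeastAtMost)

lemma prefs_snoc: "prefs (w @ [x]) = prefs w @ [red (w @ [x])]"
  by (simp add: prefs_def)

lemma red_in_prefs: "red w \<in> set (prefs w)"
  by (simp add: set_prefs)

lemma key_step: "wag (s @ [flip x, x]) (ee (s @ [flip x]) @ s)"
proof -
  have "wag (s @ [flip x, x]) ((s @ winv s @ s) @ [flip x, x])"
    by (rule wag_appR[OF wag_sym[OF wag_inv]])
  moreover have "(s @ winv s @ s) @ [flip x, x] = s @ ee (winv s) @ ee [flip x]"
    by (simp add: ee_def)
  moreover have "wag (s @ ee (winv s) @ ee [flip x]) (s @ ee [flip x] @ ee (winv s))"
    by (rule wag_appL[OF ee_comm])
  moreover have "s @ ee [flip x] @ ee (winv s) = ee (s @ [flip x]) @ s"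
    by (simp add: ee_def)
  ultimately show ?thesis by (auto intro: wag_trans)
qed

lemma normal_form: "wag w (prodE (prefs w) @ red w)"
proof (induction w rule: rev_induct)
  case Nil then show ?case by (simp add: prefs_def ee_def wag_refl)
next
  case (snoc x w)
  define E where "E = prodE (prefs w)"
  have IH: "wag (w @ [x]) (E @ red w @ [x])"
    using wag_appR[OF snoc.IH, of "[x]"] by (simp add: E_def)
  show ?case
  proof (cases "red w \<noteq> [] \<and> last (red w) = flip x")
    case True
    then obtain s where s: "red w = s @ [flip x]" by (cases "red w" rule: rev_cases) auto
    then have rx: "red (w @ [x]) = s" by (simp add: red_snoc stp_def)
    have "wag (E @ red w @ [x]) (E @ ee (s @ [flip x]) @ s)"
      using wag_appL[OF key_step[of s x], of E] s by simp
    moreover have "wag (E @ ee (s @ [flip x]) @ s) (E @ s)"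
    proof -
      have "wag (ee (s @ [flip x]) @ E) E"
        unfolding E_def by (rule P2) (metis red_in_prefs s)
      then have "wag (E @ ee (s @ [flip x])) E"
        using P1[of "s @ [flip x]" "prefs w"] unfolding E_def by (auto intro: wag_trans wag_sym)
      then show ?thesis using wag_appR by fastforce
    qed
    moreover have "wag (E @ s) (E @ ee s @ s)"
      using wag_appL[OF wag_sym[OF wag_inv[of s]], of E] by (simp add: ee_def)
    ultimately have "wag (w @ [x]) (E @ ee s @ s)" using IH by (auto intro: wag_trans)
    then show ?thesis by (simp add: prefs_snoc rx E_def)
  next
    case False
    then have rx: "red (w @ [x]) = red w @ [x]" by (auto simp: red_snoc stp_def)
    have "wag (E @ red w @ [x]) (E @ ee (red w @ [x]) @ (red w @ [x]))"
      using wag_appL[OF wag_sym[OF wag_inv[of "red w @ [x]"]], of E] by (simp add: ee_def)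
    then have "wag (w @ [x]) (E @ ee (red w @ [x]) @ (red w @ [x]))" using IH by (auto intro: wag_trans)
    then show ?thesis by (simp add: prefs_snoc rx E_def)
  qed
qed

theorem completeness_idem:
  assumes "red u = []" "red v = []" "tree u = tree v"
  shows "wag u v"
proof -
  have "wag u (prodE (prefs u))" using normal_form[of u] assms by simp
  moreover have "wag (prodE (prefs u)) (prodE (prefs v))" using assms by (intro P5) (simp add: set_prefs)
  moreover have "wag v (prodE (prefs v))" using normal_form[of v] assms by simp
  ultimately show ?thesis by (auto intro: wag_trans wag_sym)
qed



definition WT :: "nat \<Rightarrow> letter list set set" where
  "WT r = {T. finite T \<and> [] \<in> T \<and> (\<forall>w\<in>T. \<forall>k. take k w \<in> T) \<and> (\<forall>w\<in>T. w \<in> words r \<and> reduced w)}"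

lemma set_foldl_stp: "set (foldl stp s w) \<subseteq> set s \<union> set w"
proof (induction w arbitrary: s)
  case Nil then show ?case by simp
next
  case (Cons x w)
  have "set (stp s x) \<subseteq> set s \<union> {x}" by (auto simp: stp_def dest: in_set_butlastD)
  then show ?case using Cons[of "stp s x"] by auto
qed

lemma set_red: "set (red w) \<subseteq> set w"
  using set_foldl_stp[of "[]" w] by (simp add: red_def)

lemma words_take: "w \<in> words r \<Longrightarrow> take k w \<in> words r"
  by (auto simp: words_def dest: in_set_takeD)

lemma words_red: "w \<in> words r \<Longrightarrow> red w \<in> words r"
  using set_red by (auto simp: words_def)

lemma words_append[simp]: "a @ b \<in> words r \<longleftrightarrow> a \<in> words r \<and> b \<in> words r"
  by (auto simp: words_def)

lemma tree_WT: "w \<in> words r \<Longrightarrow> tree w \<in> WT r"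
proof -
  assume w: "w \<in> words r"
  have "\<forall>t\<in>tree w. t \<in> words r \<and> reduced t" using w by (auto simp: tree_def words_red words_take reduced_red)
  then show ?thesis unfolding WT_def using tree_prefix by auto
qed

lemma card_tree_bound: "2 * card (tree w) \<le> length w + length (red w) + 2"
proof (induction w rule: rev_induct)
  case Nil then show ?case by (simp add: tree_def)
next
  case (snoc x w)
  show ?case
  proof (cases "red w \<noteq> [] \<and> last (red w) = flip x")
    case True
    then have rx: "red (w @ [x]) = take (length (red w) - 1) (red w)"
      by (simp add: red_snoc stp_def butlast_conv_take)
    then have "red (w @ [x]) \<in> tree w" using take_red_in_tree by simp
    then have "tree (w @ [x]) = tree w" by (simp add: tree_snoc insert_absorb)
    then show ?thesis using snoc True rx by simp
  next
    case False
    then have rx: "red (w @ [x]) = red w @ [x]" by (auto simp: red_snoc stp_def)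
    have "card (tree (w @ [x])) \<le> Suc (card (tree w))" by (simp add: tree_snoc card_insert_if)
    then show ?thesis using snoc rx by simp
  qed
qed

lemma red_single_pair: "red (x # flip x # s) = red s"
proof -
  have "red [x, flip x] = []" using red_winv[of "[x]"] by simp
  then show ?thesis using red_append_left[of "[x, flip x]" s] by simp
qed

lemma tree_pair: "tree [x, flip x] = {[], [x]}"
proof -
  have "tree [x, flip x] = insert (red [x, flip x]) (insert (red [x]) (tree []))"
    using tree_snoc[of "[x]" "flip x"] tree_snoc[of "[]" x] by simp
  moreover have "red [x, flip x] = []" using red_winv[of "[x]"] by simp
  moreover have "red [x] = [x]" by (simp add: red_reduced)
  moreover have "tree [] = {[]}" by (simp add: tree_def)
  ultimately show ?thesis by auto
qed

lemma tree_insert_pair: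
  "tree (a @ [x, flip x] @ b) = insert (red (a @ [x])) (tree (a @ b))"
proof -
  have "tree ([x, flip x] @ b) = {[], [x]} \<union> tree b"
  proof -
    have "tree ([x, flip x] @ b) = tree [x, flip x] \<union> (\<lambda>s. red ([x, flip x] @ s)) ` tree b"
      by (rule tree_append)
    also have "(\<lambda>s. red ([x, flip x] @ s)) ` tree b = tree b"
      using tree_reduced by (auto simp: red_single_pair image_iff)
    finally show ?thesis by (simp add: tree_pair)
  qed
  then have "tree (a @ [x, flip x] @ b) = tree a \<union> {red (a @ []), red (a @ [x])} \<union> (\<lambda>s. red (a @ s)) ` tree b"
    by (simp add: tree_append image_Un Un_assoc)
  moreover have "red a \<in> tree a" by simp
  ultimately show ?thesis by (auto simp: tree_append)
qed

lemma dfs_exists: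
  "T \<in> WT r \<Longrightarrow> \<exists>w \<in> words r. red w = [] \<and> tree w = T \<and> length w = 2 * (card T - 1)"
proof (induction "card T" arbitrary: T)
  case 0
  then have False by (auto simp: WT_def)
  then show ?case ..
next
  case (Suc n)
  have T: "finite T" "[] \<in> T" "\<And>w k. w \<in> T \<Longrightarrow> take k w \<in> T" "\<And>w. w \<in> T \<Longrightarrow> w \<in> words r \<and> reduced w"
    using Suc.prems by (auto simp: WT_def)
  show ?case
  proof (cases "T = {[]}")
    case True
    then show ?thesis by (intro bexI[of _ "[]"]) (auto simp: tree_def words_def)
  next
    case False
    obtain t where tT: "t \<in> T" and tmax: "\<And>u. u \<in> T \<Longrightarrow> length u \<le> length t"
    proof -
      have "Max (length ` T) \<in> length ` T" using T(1,2) by (intro Max_in) auto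
      then obtain t where "t \<in> T" "length t = Max (length ` T)" by auto
      then show thesis using that T(1) by (metis Max_ge finite_imageI imageI)
    qed
    have "t \<noteq> []"
    proof
      assume "t = []"
      then have "\<And>u. u \<in> T \<Longrightarrow> u = []" using tmax by auto
      then show False using False T(2) by auto
    qed
    then obtain p x where tpx: "t = p @ [x]" by (cases t rule: rev_cases) auto
    define T' where "T' = T - {t}"
    have "p \<in> T'"
    proof -
      have "take (length p) t = p" using tpx by simp
      then show ?thesis using T(3)[OF tT, of "length p"] tpx by (auto simp: T'_def)
    qed
    have T'WT: "T' \<in> WT r"
      unfolding WT_def
    proof (intro CollectI conjI ballI allI)
      show "finite T'" using T(1) by (simp add: T'_def)
      show "[] \<in> T'" using T(2) \<open>t \<noteq> []\<close> by (simp add: T'_def)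
      fix w k assume w: "w \<in> T'"
      show "take k w \<in> T'"
      proof (cases "k < length w")
        case True
        then have "length (take k w) < length t" using tmax[of w] w by (auto simp: T'_def)
        then show ?thesis using T(3)[of w k] w by (auto simp: T'_def)
      next
        case False
        then show ?thesis using w by simp
      qed
    next
      fix w assume "w \<in> T'" then show "w \<in> words r" using T(4) by (auto simp: T'_def)
    next
      fix w assume "w \<in> T'" then show "reduced w" using T(4) by (auto simp: T'_def)
    qed
    have cT': "card T' = n" using Suc.hyps(2) tT T(1) by (simp add: T'_def)
    obtain w' where w': "w' \<in> words r" "red w' = []" "tree w' = T'" "length w' = 2 * (card T' - 1)"
      using Suc.hyps(1)[OF cT'[symmetric] T'WT] by blast
    from \<open>p \<in> T'\<close> w'(3) obtain i where i: "i \<le> length w'" "p = red (take i w')"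
      by (auto simp: tree_def)
    define w where "w = take i w' @ [x, flip x] @ drop i w'"
    have xw: "[x] \<in> words r" using T(4)[OF tT] tpx by (simp add: words_def)
    have "w \<in> words r" using xw w'(1) by (auto simp: w_def words_def dest: in_set_takeD in_set_dropD)
    moreover have "red w = []"
    proof -
      have "red w = red (take i w' @ red ([x, flip x] @ drop i w'))"
        unfolding w_def by (rule red_append_right)
      also have "\<dots> = red (take i w' @ drop i w')"
        by (simp add: red_single_pair red_append_right[symmetric])
      finally show ?thesis using w'(2) by simp
    qed
    moreover have "tree w = T"
    proof -
      have "red (take i w' @ [x]) = red (p @ [x])"
        using i red_append_left[of "take i w'" "[x]"] by simp
      also have "\<dots> = t" using tpx T(4)[OF tT] by (simp add: red_reduced)
      finally show ?thesis unfolding w_def using tree_insert_pair[of "take i w'" x "drop i w'"] w'(3) tT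
        by (auto simp: T'_def)
    qed
    moreover have "length w = 2 * (card T - 1)"
    proof -
      have "card T' \<noteq> 0" using T'WT by (auto simp: WT_def)
      then show ?thesis using w'(4) cT' Suc.hyps(2) i by (simp add: w_def)
    qed
    ultimately show ?thesis by blast
  qed
qed



lemma wag_fim_elem: "wag a b \<Longrightarrow> fim_elem r a = fim_elem r b"
  unfolding fim_elem_def by (auto intro: wag_trans wag_sym)

lemma mem_fim_elem: "w \<in> words r \<Longrightarrow> w \<in> fim_elem r w"
  by (simp add: fim_elem_def wag_refl)

lemma fim_elem_eq_wag: "a \<in> words r \<Longrightarrow> fim_elem r a = fim_elem r b \<Longrightarrow> wag a b"
  unfolding fim_elem_def using wag_refl by blast

lemma idem_iff:
  assumes w: "w \<in> words r"
  shows "fim_elem r (w @ w) = fim_elem r w \<longleftrightarrow> red w = []"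
proof
  assume e: "fim_elem r (w @ w) = fim_elem r w"
  have "wag (w @ w) w" using fim_elem_eq_wag[OF _ e] w by simp
  then have rr: "red (w @ w) = red w" using wag_invariant by blast
  define s where "s = red w"
  have ss: "red (s @ s) = s" using rr red_append[of w w] by (simp add: s_def)
  have "red (winv s @ s @ s) = red (winv s @ s)"
    using red_append_right[of "winv s" "s @ s"] ss red_append_right[of "winv s" s]
    by (simp add: s_def)
  also have "\<dots> = []" by (rule red_winv2)
  finally have a: "red (winv s @ s @ s) = []" .
  have "red (winv s @ s @ s) = red (red (winv s @ s) @ s)"
    using red_append_left[of "winv s @ s" s] by simp
  also have "\<dots> = s" by (simp add: red_winv2 s_def)
  finally show "red w = []" using a by (simp add: s_def)
next
  assume r: "red w = []"
  have "red (w @ w) = []" using red_append[of w w] r by simp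
  moreover have "tree (w @ w) = tree w"
  proof -
    have "(\<lambda>s. red (w @ s)) ` tree w = tree w"
    proof -
      have "red (w @ s) = s" if "s \<in> tree w" for s
        using red_append_left[of w s] r tree_reduced[OF that] by simp
      then show ?thesis by (auto simp: image_iff)
    qed
    then show ?thesis by (simp add: tree_append)
  qed
  ultimately have "wag (w @ w) w" using r by (intro completeness_idem) auto
  then show "fim_elem r (w @ w) = fim_elem r w" by (rule wag_fim_elem)
qed

definition dfs :: "nat \<Rightarrow> letter list set \<Rightarrow> letter list" where
  "dfs r T = (SOME w. w \<in> words r \<and> red w = [] \<and> tree w = T \<and> length w = 2 * (card T - 1))"

lemma dfs: "T \<in> WT r \<Longrightarrow> dfs r T \<in> words r \<and> red (dfs r T) = [] \<and> tree (dfs r T) = T \<and> length (dfs r T) = 2 * (card T - 1)"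
  unfolding dfs_def by (rule someI_ex) (use dfs_exists in blast)

lemma fim_length_idem:
  assumes w: "w \<in> words r" "red w = []"
  shows "fim_length (fim_elem r w) = 2 * (card (tree w) - 1)"
  unfolding fim_length_def
proof (rule Least_equality)
  have T: "tree w \<in> WT r" using w(1) by (rule tree_WT)
  have "wag (dfs r (tree w)) w" using dfs[OF T] w by (intro completeness_idem) auto
  then show "\<exists>v\<in>fim_elem r w. length v = 2 * (card (tree w) - 1)"
    using dfs[OF T] by (auto simp: fim_elem_def)
next
  fix n assume "\<exists>v\<in>fim_elem r w. length v = n"
  then obtain v where v: "wag v w" "length v = n" by (auto simp: fim_elem_def)
  then have "red v = []" "tree v = tree w" using wag_invariant w by auto
  then show "2 * (card (tree w) - 1) \<le> n" using card_tree_bound[of v] v by simp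
qed

theorem idem_count_eq: "idem_count r K = card {T \<in> WT r. 2 * (card T - 1) = K}"
proof -
  define g where "g T = fim_elem r (dfs r T)" for T
  have inj: "inj_on g (WT r)"
  proof
    fix T T' assume T: "T \<in> WT r" "T' \<in> WT r" "g T = g T'"
    have "wag (dfs r T) (dfs r T')" using fim_elem_eq_wag[OF _ T(3)[unfolded g_def]] dfs[OF T(1)] by simp
    then have "tree (dfs r T) = tree (dfs r T')" using wag_invariant by blast
    then show "T = T'" using dfs[OF T(1)] dfs[OF T(2)] by simp
  qed
  have img: "{c \<in> FIM r. fim_length c = K \<and> fim_idem r c} = g ` {T \<in> WT r. 2 * (card T - 1) = K}"
  proof (intro equalityI subsetI)
    fix c assume c: "c \<in> {c \<in> FIM r. fim_length c = K \<and> fim_idem r c}"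
    then obtain w where w: "w \<in> words r" "c = fim_elem r w" "fim_elem r (w @ w) = c"
      by (auto simp: fim_idem_def)
    then have rw: "red w = []" using idem_iff[OF w(1)] by simp
    have T: "tree w \<in> WT r" using w by (simp add: tree_WT)
    have "wag (dfs r (tree w)) w" using dfs[OF T] rw by (intro completeness_idem) auto
    then have "g (tree w) = c" unfolding g_def using w(2) by (simp add: wag_fim_elem)
    moreover have "2 * (card (tree w) - 1) = K" using c fim_length_idem[OF w(1) rw] w(2) by simp
    ultimately show "c \<in> g ` {T \<in> WT r. 2 * (card T - 1) = K}" using T by blast
  next
    fix c assume "c \<in> g ` {T \<in> WT r. 2 * (card T - 1) = K}"
    then obtain T where T: "T \<in> WT r" "2 * (card T - 1) = K" "c = g T" by auto
    note d = dfs[OF T(1)]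
    have "c \<in> FIM r" using T d by (simp add: g_def FIM_def)
    moreover have "fim_length c = K" using T d fim_length_idem[of "dfs r T" r] by (simp add: g_def)
    moreover have "fim_idem r c" using T d idem_iff[of "dfs r T" r] by (auto simp: g_def fim_idem_def)
    ultimately show "c \<in> {c \<in> FIM r. fim_length c = K \<and> fim_idem r c}" by simp
  qed
  show ?thesis unfolding idem_count_def img
    by (rule card_image) (use inj in \<open>auto intro: inj_on_subset\<close>)
qed



definition Lr :: "nat \<Rightarrow> letter list" where
  "Lr r = concat (map (\<lambda>i. [(i, False), (i, True)]) [0..<r])"

lemma set_Lr: "set (Lr r) = {l. fst l < r}"
  by (auto simp: Lr_def)

lemma distinct_Lr: "distinct (Lr r)"
proof (induction r)
  case 0 then show ?case by (simp add: Lr_def)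
next
  case (Suc r)
  have "Lr (Suc r) = Lr r @ [(r, False), (r, True)]" by (simp add: Lr_def)
  then show ?case using Suc set_Lr[of r] by auto
qed

lemma length_Lr: "length (Lr r) = 2 * r"
  by (induction r) (simp_all add: Lr_def)

definition allowed :: "nat \<Rightarrow> letter list \<Rightarrow> letter list" where
  "allowed r w = filter (\<lambda>y. w = [] \<or> y \<noteq> flip (last w)) (Lr r)"

lemma distinct_allowed: "distinct (allowed r w)"
  by (simp add: allowed_def distinct_Lr)

lemma set_allowed: "set (allowed r w) = {y. fst y < r \<and> (w = [] \<or> y \<noteq> flip (last w))}"
  by (auto simp: allowed_def set_Lr)

lemma length_allowed_Nil: "length (allowed r []) = 2 * r"
  by (simp add: allowed_def length_Lr)

lemma length_allowed: "w \<noteq> [] \<Longrightarrow> fst (last w) < r \<Longrightarrow> length (allowed r w) = 2 * r - 1"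
proof -
  assume w: "w \<noteq> []" "fst (last w) < r"
  have "length (allowed r w) = card ({y. y \<noteq> flip (last w)} \<inter> set (Lr r))"
    unfolding allowed_def using w by (simp add: distinct_length_filter distinct_Lr)
  also have "{y. y \<noteq> flip (last w)} \<inter> set (Lr r) = set (Lr r) - {flip (last w)}" by auto
  also have "card (set (Lr r) - {flip (last w)}) = 2 * r - 1"
  proof -
    have "flip (last w) \<in> set (Lr r)" using w by (simp add: set_Lr)
    then have "card (set (Lr r) - {flip (last w)}) = card (set (Lr r)) - 1" by (simp add: card_Diff_singleton)
    also have "card (set (Lr r)) = 2 * r" using distinct_card[OF distinct_Lr] length_Lr by simp
    finally show ?thesis .
  qed
  finally show ?thesis .
qed

definition word_of :: "nat \<Rightarrow> nat list \<Rightarrow> letter list" where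
  "word_of r p = foldl (\<lambda>w i. w @ [allowed r w ! i]) [] p"

lemma word_of_Nil[simp]: "word_of r [] = []" by (simp add: word_of_def)
lemma word_of_snoc: "word_of r (p @ [i]) = word_of r p @ [allowed r (word_of r p) ! i]"
  by (simp add: word_of_def)

lemma length_word_of[simp]: "length (word_of r p) = length p"
  by (induction p rule: rev_induct) (simp_all add: word_of_snoc)

lemma take_word_of: "take k (word_of r p) = word_of r (take k p)"
proof (induction p rule: rev_induct)
  case Nil then show ?case by simp
next
  case (snoc i p)
  show ?case
  proof (cases "k \<le> length p")
    case True
    then show ?thesis using snoc by (simp add: word_of_snoc)
  next
    case False
    then show ?thesis by simp
  qed
qed

definition vp :: "nat \<Rightarrow> nat \<Rightarrow> nat list \<Rightarrow> bool" where
  "vp j m p = (\<forall>k<length p. p ! k < (if k = 0 then j else m))"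

lemma vp_Nil[simp]: "vp j m []" by (simp add: vp_def)

lemma vp_snoc: "vp j m (p @ [i]) \<longleftrightarrow> vp j m p \<and> i < (if p = [] then j else m)"
  by (auto simp: vp_def nth_append less_Suc_eq)

lemma vp_take: "vp j m p \<Longrightarrow> vp j m (take k p)"
  by (simp add: vp_def)

lemma vp_Cons: "vp j m (i # p) \<longleftrightarrow> i < j \<and> vp m m p"
  by (auto simp: vp_def nth_Cons' less_Suc_eq_0_disj)

context
  fixes r :: nat
  assumes r: "r \<ge> 1"
begin

lemma word_of_valid: "vp (2 * r) (2 * r - 1) p \<Longrightarrow> word_of r p \<in> words r \<and> reduced (word_of r p)"
proof (induction p rule: rev_induct)
  case Nil then show ?case by (simp add: words_def)
next
  case (snoc i p)
  then have p: "vp (2 * r) (2 * r - 1) p" and i: "i < (if p = [] then 2 * r else 2 * r - 1)"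
    by (auto simp: vp_snoc)
  have IH: "word_of r p \<in> words r" "reduced (word_of r p)" using snoc.IH p by auto
  have len: "i < length (allowed r (word_of r p))"
  proof (cases "p = []")
    case True then show ?thesis using i by (simp add: length_allowed_Nil)
  next
    case False
    then have "word_of r p \<noteq> []" by (metis length_0_conv length_word_of)
    moreover have "fst (last (word_of r p)) < r" using IH(1) \<open>word_of r p \<noteq> []\<close> by (auto simp: words_def)
    ultimately show ?thesis using i False by (simp add: length_allowed)
  qed
  then have "allowed r (word_of r p) ! i \<in> set (allowed r (word_of r p))" by simp
  then show ?case using IH by (auto simp: word_of_snoc set_allowed words_def reduced_snoc)
qed

lemma word_of_inj: "vp (2 * r) (2 * r - 1) p \<Longrightarrow> vp (2 * r) (2 * r - 1) q \<Longrightarrow> word_of r p = word_of r q \<Longrightarrow> p = q"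
proof (induction p arbitrary: q rule: rev_induct)
  case Nil then show ?case by (metis length_0_conv length_word_of)
next
  case (snoc i p)
  obtain q' i' where q: "q = q' @ [i']"
    using snoc.prems(3) by (cases q rule: rev_cases) (metis length_0_conv length_word_of snoc_eq_iff_butlast, auto)
  have len: "length q' = length p" using snoc.prems(3) q by (metis length_append_singleton length_word_of nat.inject)
  have vp': "vp (2 * r) (2 * r - 1) p" "vp (2 * r) (2 * r - 1) q'" using snoc.prems q by (auto simp: vp_snoc)
  have eq: "word_of r p = word_of r q'" and eqi: "allowed r (word_of r p) ! i = allowed r (word_of r q') ! i'"
    using snoc.prems(3) q by (auto simp: word_of_snoc)
  have pq: "p = q'" using snoc.IH[OF vp'(1) vp'(2) eq] .
  have lt: "i < length (allowed r (word_of r p))" "i' < length (allowed r (word_of r p))"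
  proof -
    have ii: "i < (if p = [] then 2 * r else 2 * r - 1)" "i' < (if p = [] then 2 * r else 2 * r - 1)"
      using snoc.prems q pq by (auto simp: vp_snoc)
    have "length (allowed r (word_of r p)) = (if p = [] then 2 * r else 2 * r - 1)"
    proof (cases "p = []")
      case True then show ?thesis by (simp add: length_allowed_Nil)
    next
      case False
      then have ne: "word_of r p \<noteq> []" by (metis length_0_conv length_word_of)
      have "fst (last (word_of r p)) < r" using word_of_valid[OF vp'(1)] ne by (auto simp: words_def)
      then show ?thesis using False ne by (simp add: length_allowed)
    qed
    then show "i < length (allowed r (word_of r p))" "i' < length (allowed r (word_of r p))" using ii by auto
  qed
  have "i = i'" using eqi pq lt distinct_allowed nth_eq_iff_index_eq by metis
  then show ?case using pq q by simp
qed

lemma word_of_surj: "w \<in> words r \<Longrightarrow> reduced w \<Longrightarrow> \<exists>p. vp (2 * r) (2 * r - 1) p \<and> word_of r p = w"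
proof (induction w rule: rev_induct)
  case Nil then show ?case by (intro exI[of _ "[]"]) simp
next
  case (snoc x w)
  then have w: "w \<in> words r" "reduced w" and x: "fst x < r" "w \<noteq> [] \<longrightarrow> x \<noteq> flip (last w)"
    by (auto simp: words_def reduced_snoc)
  obtain p where p: "vp (2 * r) (2 * r - 1) p" "word_of r p = w" using snoc.IH w by blast
  have "x \<in> set (allowed r w)" using x by (auto simp: set_allowed)
  then obtain i where i: "i < length (allowed r w)" "allowed r w ! i = x" by (auto simp: in_set_conv_nth)
  have "length (allowed r w) = (if p = [] then 2 * r else 2 * r - 1)"
  proof (cases "p = []")
    case True then show ?thesis using p by (simp add: length_allowed_Nil)
  next
    case False
    then have ne: "w \<noteq> []" using p by (metis length_0_conv length_word_of)
    then have "fst (last w) < r" using w by (auto simp: words_def)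
    then show ?thesis using False ne by (simp add: length_allowed)
  qed
  then have "vp (2 * r) (2 * r - 1) (p @ [i])" using p i by (auto simp: vp_snoc split: if_split_asm)
  moreover have "word_of r (p @ [i]) = w @ [x]" using p i by (simp add: word_of_snoc)
  ultimately show ?case by blast
qed

end

definition PCI :: "nat \<Rightarrow> nat \<Rightarrow> nat list set set" where
  "PCI j m = {S. finite S \<and> [] \<in> S \<and> (\<forall>p\<in>S. \<forall>k. take k p \<in> S) \<and> (\<forall>p\<in>S. vp j m p)}"

lemma card_WT_PCI:
  assumes r: "r \<ge> 1"
  shows "card {T \<in> WT r. card T = n} = card {S \<in> PCI (2 * r) (2 * r - 1). card S = n}"
proof -
  let ?V = "{p. vp (2 * r) (2 * r - 1) p}"
  have injV: "inj_on (word_of r) ?V" using word_of_inj[OF r] by (auto intro: inj_onI)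
  define h where "h S = word_of r ` S" for S
  have injS: "inj_on (word_of r) S" if "S \<in> PCI (2 * r) (2 * r - 1)" for S
    using that by (auto simp: PCI_def intro: inj_on_subset[OF injV])
  have "bij_betw h {S \<in> PCI (2 * r) (2 * r - 1). card S = n} {T \<in> WT r. card T = n}"
  proof (rule bij_betw_imageI)
    show "inj_on h {S \<in> PCI (2 * r) (2 * r - 1). card S = n}"
    proof
      fix S S' assume S: "S \<in> {S \<in> PCI (2 * r) (2 * r - 1). card S = n}" "S' \<in> {S \<in> PCI (2 * r) (2 * r - 1). card S = n}" "h S = h S'"
      have vS: "\<And>p. p \<in> S \<Longrightarrow> p \<in> ?V" "\<And>p. p \<in> S' \<Longrightarrow> p \<in> ?V" using S by (auto simp: PCI_def)
      show "S = S'"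
      proof (intro equalityI subsetI)
        fix p assume "p \<in> S"
        then have "word_of r p \<in> h S'" using S(3) by (auto simp: h_def)
        then obtain q where "q \<in> S'" "word_of r q = word_of r p" by (auto simp: h_def)
        then show "p \<in> S'" using vS \<open>p \<in> S\<close> injV by (metis inj_onD)
      next
        fix p assume "p \<in> S'"
        then have "word_of r p \<in> h S" using S(3) by (auto simp: h_def)
        then obtain q where "q \<in> S" "word_of r q = word_of r p" by (auto simp: h_def)
        then show "p \<in> S" using vS \<open>p \<in> S'\<close> injV by (metis inj_onD)
      qed
    qed
  next
    show "h ` {S \<in> PCI (2 * r) (2 * r - 1). card S = n} = {T \<in> WT r. card T = n}"
    proof (intro equalityI subsetI)
      fix T assume "T \<in> h ` {S \<in> PCI (2 * r) (2 * r - 1). card S = n}"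
      then obtain S where S: "S \<in> PCI (2 * r) (2 * r - 1)" "card S = n" "T = h S" by auto
      have "h S \<in> WT r"
        unfolding WT_def
      proof (intro CollectI conjI ballI allI)
        show "finite (h S)" using S by (simp add: PCI_def h_def)
        show "[] \<in> h S" using S by (auto simp: PCI_def h_def intro: image_eqI[of _ _ "[]"])
      next
        fix w k assume "w \<in> h S"
        then obtain p where p: "p \<in> S" "w = word_of r p" by (auto simp: h_def)
        then have "take k p \<in> S" using S by (auto simp: PCI_def)
        then show "take k w \<in> h S" using p by (simp add: h_def take_word_of)
      next
        fix w assume "w \<in> h S"
        then obtain p where p: "p \<in> S" "w = word_of r p" by (auto simp: h_def)
        then have "vp (2 * r) (2 * r - 1) p" using S by (auto simp: PCI_def)
        then show "w \<in> words r" "reduced w" using word_of_valid[OF r] p by auto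
      qed
      moreover have "card (h S) = n" using S card_image[OF injS[OF S(1)]] by (simp add: h_def)
      ultimately show "T \<in> {T \<in> WT r. card T = n}" using S by simp
    next
      fix T assume T: "T \<in> {T \<in> WT r. card T = n}"
      define S where "S = {p. vp (2 * r) (2 * r - 1) p \<and> word_of r p \<in> T}"
      have hS: "h S = T"
      proof (intro equalityI subsetI)
        fix w assume "w \<in> h S" then show "w \<in> T" by (auto simp: h_def S_def)
      next
        fix w assume "w \<in> T"
        then have "w \<in> words r" "reduced w" using T by (auto simp: WT_def)
        then obtain p where "vp (2 * r) (2 * r - 1) p" "word_of r p = w" using word_of_surj[OF r] by blast
        then show "w \<in> h S" using \<open>w \<in> T\<close> by (auto simp: h_def S_def)
      qed
      have "S \<in> PCI (2 * r) (2 * r - 1)"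
        unfolding PCI_def
      proof (intro CollectI conjI ballI allI)
        have "finite (word_of r ` S)" using hS T by (simp add: h_def WT_def)
        then show "finite S" by (rule finite_imageD) (auto intro: inj_on_subset[OF injV] simp: S_def)
        show "[] \<in> S" using T by (simp add: S_def WT_def)
      next
        fix p k assume "p \<in> S"
        then show "take k p \<in> S" using T by (auto simp: S_def WT_def vp_take take_word_of[symmetric])
      next
        fix p assume "p \<in> S" then show "vp (2 * r) (2 * r - 1) p" by (simp add: S_def)
      qed
      moreover have "card S = n"
      proof -
        have "card (h S) = card S" unfolding h_def
          by (rule card_image) (auto intro: inj_on_subset[OF injV] simp: S_def)
        then show ?thesis using hS T by simp
      qed
      ultimately show "T \<in> h ` {S \<in> PCI (2 * r) (2 * r - 1). card S = n}" using hS by blast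
    qed
  qed
  then show ?thesis by (simp add: bij_betw_same_card)
qed

lemma idem_count_even:
  assumes "r \<ge> 1"
  shows "idem_count r (2 * k) = card {S \<in> PCI (2 * r) (2 * r - 1). card S = Suc k}"
proof -
  have "{T \<in> WT r. 2 * (card T - 1) = 2 * k} = {T \<in> WT r. card T = Suc k}"
  proof -
    have "card T \<noteq> 0" if "T \<in> WT r" for T using that by (auto simp: WT_def)
    then show ?thesis by force
  qed
  then show ?thesis using card_WT_PCI[OF assms] by (simp add: idem_count_eq)
qed

lemma idem_count_odd: "idem_count r (Suc (2 * k)) = 0"
proof -
  have "\<forall>x. 2 * x \<noteq> Suc (2 * k)" by presburger
  then show ?thesis by (simp add: idem_count_eq)
qed



definition PCD :: "nat \<Rightarrow> nat \<Rightarrow> nat \<Rightarrow> nat list set set" where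
  "PCD j m D = {S \<in> PCI j m. \<forall>p\<in>S. length p < D}"

definition glue :: "nat \<Rightarrow> (nat \<Rightarrow> nat list set) \<Rightarrow> nat list set" where
  "glue j F = insert [] (\<Union>i<j. (#) i ` F i)"

lemma PCD_0: "PCD j m 0 = {}" by (auto simp: PCD_def PCI_def)

lemma Nil_PCI: "S \<in> PCI j m \<Longrightarrow> [] \<in> S" by (simp add: PCI_def)

lemma glue_in: "i < j \<Longrightarrow> (i # p \<in> glue j F) \<longleftrightarrow> p \<in> F i"
  by (auto simp: glue_def)

lemma PCD_decomp: "PCD j m (Suc D) = glue j ` PiE {..<j} (\<lambda>_. insert {} (PCD m m D))"
proof (intro equalityI subsetI)
  fix S assume S: "S \<in> PCD j m (Suc D)"
  then have S': "finite S" "[] \<in> S" "\<And>p k. p \<in> S \<Longrightarrow> take k p \<in> S" "\<And>p. p \<in> S \<Longrightarrow> vp j m p"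
    "\<And>p. p \<in> S \<Longrightarrow> length p < Suc D"
    by (auto simp: PCD_def PCI_def)
  define F where "F = (\<lambda>i\<in>{..<j}. {p. i # p \<in> S})"
  have "F i \<in> insert {} (PCD m m D)" if i: "i < j" for i
  proof (cases "F i = {}")
    case True then show ?thesis by simp
  next
    case False
    then obtain p where p: "i # p \<in> S" using i by (auto simp: F_def)
    have "F i \<in> PCI m m"
      unfolding PCI_def
    proof (intro CollectI conjI ballI allI)
      have "finite (Cons i -` S)" using S'(1) by (rule finite_vimageI) simp
      then show "finite (F i)" using i by (simp add: F_def vimage_def)
      show "[] \<in> F i" using S'(3)[OF p, of 1] i by (simp add: F_def)
    next
      fix q k assume "q \<in> F i"
      then have "i # q \<in> S" using i by (simp add: F_def)
      then show "take k q \<in> F i" using S'(3)[of "i # q" "Suc k"] i by (simp add: F_def)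
    next
      fix q assume "q \<in> F i"
      then have "i # q \<in> S" using i by (simp add: F_def)
      then show "vp m m q" using S'(4)[of "i # q"] by (simp add: vp_Cons)
    qed
    moreover have "\<forall>q\<in>F i. length q < D" using i by (auto simp: F_def dest: S'(5))
    ultimately show ?thesis by (simp add: PCD_def)
  qed
  then have "F \<in> PiE {..<j} (\<lambda>_. insert {} (PCD m m D))" by (auto simp: F_def)
  moreover have "glue j F = S"
  proof (intro equalityI subsetI)
    fix p assume "p \<in> glue j F" then show "p \<in> S" using S'(2) by (auto simp: glue_def F_def)
  next
    fix p assume p: "p \<in> S"
    show "p \<in> glue j F"
    proof (cases p)
      case Nil then show ?thesis by (simp add: glue_def)
    next
      case (Cons i q)
      then have "i < j" using S'(4)[OF p] by (simp add: vp_Cons)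
      then show ?thesis using p Cons by (auto simp: glue_def F_def)
    qed
  qed
  ultimately show "S \<in> glue j ` PiE {..<j} (\<lambda>_. insert {} (PCD m m D))" by blast
next
  fix S assume "S \<in> glue j ` PiE {..<j} (\<lambda>_. insert {} (PCD m m D))"
  then obtain F where F: "F \<in> PiE {..<j} (\<lambda>_. insert {} (PCD m m D))" "S = glue j F" by auto
  have Fi: "F i = {} \<or> F i \<in> PCD m m D" if "i < j" for i using F(1) that by auto
  show "S \<in> PCD j m (Suc D)"
    unfolding PCD_def PCI_def
  proof (intro CollectI conjI ballI allI)
    have "finite (F i)" if "i < j" for i using Fi[OF that] by (auto simp: PCD_def PCI_def)
    then show "finite S" using F(2) by (simp add: glue_def)
    show "[] \<in> S" using F(2) by (simp add: glue_def)
  next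
    fix p k assume "p \<in> S"
    then consider "p = []" | i q where "i < j" "q \<in> F i" "p = i # q" using F(2) by (auto simp: glue_def)
    then show "take k p \<in> S"
    proof cases
      case 1 then show ?thesis using F(2) by (simp add: glue_def)
    next
      case 2
      then have "F i \<in> PCD m m D" using Fi by auto
      then have "take (k - 1) q \<in> F i" using 2 by (auto simp: PCD_def PCI_def)
      then show ?thesis using 2 F(2) by (cases k) (auto simp: glue_def)
    qed
  next
    fix p assume "p \<in> S"
    then consider "p = []" | i q where "i < j" "q \<in> F i" "p = i # q" using F(2) by (auto simp: glue_def)
    then show "vp j m p"
    proof cases
      case 1 then show ?thesis by simp
    next
      case 2
      then have "F i \<in> PCD m m D" using Fi by auto
      then show ?thesis using 2 by (auto simp: PCD_def PCI_def vp_Cons)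
    qed
  next
    fix p assume "p \<in> S"
    then consider "p = []" | i q where "i < j" "q \<in> F i" "p = i # q" using F(2) by (auto simp: glue_def)
    then show "length p < Suc D"
    proof cases
      case 1 then show ?thesis by simp
    next
      case 2
      then have "F i \<in> PCD m m D" using Fi by auto
      then show ?thesis using 2 by (auto simp: PCD_def)
    qed
  qed
qed

lemma glue_inj: "inj_on (glue j) (PiE {..<j} B)"
proof
  fix F G assume F: "F \<in> PiE {..<j} B" and G: "G \<in> PiE {..<j} B" and e: "glue j F = glue j G"
  show "F = G"
  proof
    fix i show "F i = G i"
    proof (cases "i < j")
      case True
      then show ?thesis using e glue_in[OF True] by blast
    next
      case False then show ?thesis using F G by (auto simp: PiE_def extensional_def)
    qed
  qed
qed

lemma card_glue:
  assumes "\<And>i. i < j \<Longrightarrow> finite (F i)"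
  shows "card (glue j F) = Suc (\<Sum>i<j. card (F i))"
proof -
  have "card (\<Union>i<j. (#) i ` F i) = (\<Sum>i<j. card ((#) i ` F i))"
    using assms by (intro card_UN_disjoint) auto
  also have "\<dots> = (\<Sum>i<j. card (F i))" by (simp add: card_image)
  finally show ?thesis unfolding glue_def using assms by (subst card_insert_disjoint) auto
qed

lemma finite_PCD: "finite (PCD j m D)"
proof (induction D arbitrary: j)
  case 0 then show ?case by (simp add: PCD_0)
next
  case (Suc D)
  show ?case unfolding PCD_decomp using Suc[of m] by (intro finite_imageI finite_PiE) auto
qed

lemma sum_PCD_Suc:
  fixes x :: real
  shows "(\<Sum>S\<in>PCD j m (Suc D). x ^ card S) = x * (1 + (\<Sum>S\<in>PCD m m D. x ^ card S)) ^ j"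
proof -
  let ?B = "insert {} (PCD m m D)"
  have fin: "finite T" if "T \<in> ?B" for T using that by (auto simp: PCD_def PCI_def)
  have "(\<Sum>S\<in>PCD j m (Suc D). x ^ card S) = (\<Sum>F\<in>PiE {..<j} (\<lambda>_. ?B). x ^ card (glue j F))"
    unfolding PCD_decomp by (rule sum.reindex[OF glue_inj, unfolded comp_def])
  also have "\<dots> = (\<Sum>F\<in>PiE {..<j} (\<lambda>_. ?B). x * (\<Prod>i<j. x ^ card (F i)))"
  proof (rule sum.cong[OF refl])
    fix F assume "F \<in> PiE {..<j} (\<lambda>_. ?B)"
    then have "card (glue j F) = Suc (\<Sum>i<j. card (F i))" using fin by (intro card_glue) auto
    then show "x ^ card (glue j F) = x * (\<Prod>i<j. x ^ card (F i))" by (simp add: power_sum)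
  qed
  also have "\<dots> = x * (\<Prod>i<j. \<Sum>T\<in>?B. x ^ card T)"
  proof -
    have "(\<Prod>i<j. \<Sum>T\<in>?B. x ^ card T) = (\<Sum>F\<in>PiE {..<j} (\<lambda>_. ?B). \<Prod>i<j. x ^ card (F i))"
      by (rule prod_sum_PiE) (auto simp: finite_PCD)
    then show ?thesis by (simp add: sum_distrib_left)
  qed
  also have "(\<Sum>T\<in>?B. x ^ card T) = 1 + (\<Sum>S\<in>PCD m m D. x ^ card S)"
  proof -
    have "{} \<notin> PCD m m D" by (auto simp: PCD_def PCI_def)
    then show ?thesis by (simp add: finite_PCD)
  qed
  finally show ?thesis by simp
qed



definition Acnt :: "nat \<Rightarrow> nat \<Rightarrow> nat \<Rightarrow> nat" where
  "Acnt j m n = card {S \<in> PCI j m. card S = n}"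

lemma length_lt_card:
  assumes S: "S \<in> PCI j m" "p \<in> S" shows "length p < card S"
proof -
  have sub: "(\<lambda>k. take k p) ` {0..length p} \<subseteq> S" using S by (auto simp: PCI_def)
  have "inj_on (\<lambda>k. take k p) {0..length p}"
  proof (rule inj_onI)
    fix a b assume ab: "a \<in> {0..length p}" "b \<in> {0..length p}" "take a p = take b p"
    then have "length (take a p) = length (take b p)" by simp
    then show "a = b" using ab(1,2) by (simp add: min_def split: if_splits)
  qed
  then have "card ((\<lambda>k. take k p) ` {0..length p}) = Suc (length p)" by (simp add: card_image)
  moreover have "card ((\<lambda>k. take k p) ` {0..length p}) \<le> card S"
    using S by (intro card_mono sub) (auto simp: PCI_def)
  ultimately show ?thesis by simp
qed

lemma card_level_sub: "{S \<in> PCI j m. card S = n} \<subseteq> PCD j m n"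
  using length_lt_card by (auto simp: PCD_def)

lemma finite_level: "finite {S \<in> PCI j m. card S = n}"
  using finite_subset[OF card_level_sub finite_PCD] .

lemma card_ge1: "S \<in> PCI j m \<Longrightarrow> card S \<ge> 1"
  by (auto simp: PCI_def Suc_le_eq card_gt_0_iff)

context
  fixes m :: nat
  assumes m2: "m \<ge> 2"
begin

definition x0 :: real where "x0 = real (m - 1) ^ (m - 1) / real m ^ m"
definition y0 :: real where "y0 = 1 / real (m - 1)"

lemma x0_pos: "x0 > 0" using m2 by (simp add: x0_def)

lemma x0_eq: "x0 * (real m / real (m - 1)) ^ m = y0"
proof -
  have m1: "real (m - 1) > 0" using m2 by simp
  have "real (m - 1) ^ m = real (m - 1) ^ (m - 1) * real (m - 1)"
    using m2 by (metis Suc_diff_1 less_le_trans pos2 power_Suc2)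
  then show ?thesis using m1 m2 by (simp add: x0_def y0_def power_divide field_simps)
qed

lemma one_plus_y0: "1 + y0 = real m / real (m - 1)"
  using m2 by (simp add: y0_def field_simps of_nat_diff)

lemma sum_PCD_upper: "(\<Sum>S\<in>PCD m m D. x0 ^ card S) \<le> y0"
proof (induction D)
  case 0 then show ?case using m2 by (simp add: PCD_0 y0_def)
next
  case (Suc D)
  have nn: "0 \<le> (\<Sum>S\<in>PCD m m D. x0 ^ card S)" using x0_pos by (intro sum_nonneg) simp
  have "(\<Sum>S\<in>PCD m m (Suc D). x0 ^ card S) = x0 * (1 + (\<Sum>S\<in>PCD m m D. x0 ^ card S)) ^ m"
    by (rule sum_PCD_Suc)
  also have "\<dots> \<le> x0 * (1 + y0) ^ m"
    using Suc nn x0_pos by (intro mult_left_mono power_mono) auto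
  also have "\<dots> = y0" using x0_eq one_plus_y0 by simp
  finally show ?case .
qed

lemma Acnt_upper: "real (Acnt j m n) * x0 ^ n \<le> x0 * (1 + y0) ^ j"
proof (cases n)
  case 0
  then have E: "{S \<in> PCI j m. card S = n} = {}" using card_ge1 by force
  have "Acnt j m n = 0" unfolding Acnt_def E by simp
  moreover have "y0 \<ge> 0" using m2 by (simp add: y0_def)
  ultimately show ?thesis using x0_pos by simp
next
  case (Suc D)
  have "real (Acnt j m n) * x0 ^ n = (\<Sum>S\<in>{S \<in> PCI j m. card S = n}. x0 ^ card S)"
    by (simp add: Acnt_def)
  also have "\<dots> \<le> (\<Sum>S\<in>PCD j m n. x0 ^ card S)"
    using x0_pos by (intro sum_mono2 finite_PCD card_level_sub) auto
  also have "\<dots> = x0 * (1 + (\<Sum>S\<in>PCD m m D. x0 ^ card S)) ^ j"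
    unfolding Suc by (rule sum_PCD_Suc)
  also have "\<dots> \<le> x0 * (1 + y0) ^ j"
  proof -
    have nn: "0 \<le> (\<Sum>S\<in>PCD m m D. x0 ^ card S)" using x0_pos by (intro sum_nonneg) simp
    show ?thesis using sum_PCD_upper[of D] x0_pos nn by (intro mult_left_mono power_mono) auto
  qed
  finally show ?thesis .
qed

lemma x0_tangent:
  assumes s: "s \<ge> 0" shows "s \<le> x0 * (1 + s) ^ m"
proof -
  define t where "t = (1 + s) * real (m - 1) / real m"
  have m1: "real (m - 1) > 0" "real m > 0" using m2 by auto
  have t0: "t \<ge> 0" using s m1 by (simp add: t_def)
  have "1 + real m * (t - 1) \<le> (1 + (t - 1)) ^ m"
    by (rule Bernoulli_inequality) (use t0 in simp)
  then have b: "1 + real m * (t - 1) \<le> t ^ m" by simp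
  have eq: "(1 + s) = t * (real m / real (m - 1))" using m1 by (simp add: t_def field_simps)
  have "x0 * (1 + s) ^ m = x0 * (t * (real m / real (m - 1))) ^ m" by (simp only: eq)
  also have "\<dots> = t ^ m * (x0 * (real m / real (m - 1)) ^ m)"
    by (simp only: power_mult_distrib) (rule mult.left_commute)
  also have "\<dots> = t ^ m / real (m - 1)" using x0_eq by (simp add: y0_def)
  finally have e: "x0 * (1 + s) ^ m = t ^ m / real (m - 1)" .
  have "s = (1 + real m * (t - 1)) / real (m - 1)"
  proof -
    have "real m * t = (1 + s) * real (m - 1)" using m1 by (simp add: t_def)
    then have "1 + real m * (t - 1) = s * real (m - 1)"
      using m2 by (simp add: algebra_simps of_nat_diff)
    then show ?thesis using m1 by (simp add: field_simps)
  qed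
  also have "\<dots> \<le> t ^ m / real (m - 1)" using b m1 by (simp add: divide_right_mono)
  finally show ?thesis using e by simp
qed

lemma sum_PCD_lower:
  assumes x: "x > x0" shows "real D * (x - x0) \<le> (\<Sum>S\<in>PCD m m D. x ^ card S)"
proof (induction D)
  case 0 then show ?case by (simp add: PCD_0)
next
  case (Suc D)
  define s where "s = (\<Sum>S\<in>PCD m m D. x ^ card S)"
  have s0: "s \<ge> 0" unfolding s_def using x x0_pos by (intro sum_nonneg) simp
  have "1 \<le> (1 + s) ^ m" using s0 by (simp add: one_le_power)
  then have "x - x0 \<le> (x - x0) * (1 + s) ^ m" using x by simp
  moreover have "s \<le> x0 * (1 + s) ^ m" by (rule x0_tangent[OF s0])
  ultimately have "s + (x - x0) \<le> x * (1 + s) ^ m" by (simp add: algebra_simps)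
  moreover have "(\<Sum>S\<in>PCD m m (Suc D). x ^ card S) = x * (1 + s) ^ m"
    unfolding s_def by (rule sum_PCD_Suc)
  ultimately show ?case using Suc by (simp add: s_def algebra_simps)
qed

lemma Acnt_pos: "n \<ge> 1 \<Longrightarrow> Acnt m m n \<ge> 1"
proof -
  assume n: "n \<ge> 1"
  define S where "S = (\<lambda>k. replicate k (0::nat)) ` {..<n}"
  have "S \<in> PCI m m"
    unfolding PCI_def S_def using n m2
    by (auto simp: vp_def min_def intro!: image_eqI)
  moreover have "card S = n" unfolding S_def
    by (subst card_image) (auto intro: inj_onI)
  ultimately have "S \<in> {S \<in> PCI m m. card S = n}" by simp
  then have "card {S \<in> PCI m m. card S = n} \<noteq> 0" using finite_level by (auto simp: card_eq_0_iff)
  then show ?thesis by (simp add: Acnt_def)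
qed

lemma Acnt_supermult:
  assumes p: "p \<ge> 1" and q: "q \<ge> 1"
  shows "Acnt m m p * Acnt m m q \<le> Acnt m m (p + q + 1)"
proof -
  define FF where "FF = (\<lambda>(S1::nat list set, S2::nat list set). (\<lambda>i\<in>{..<m}. if i = 0 then S1 else if i = 1 then S2 else {}))"
  define g where "g = (\<lambda>x. glue m (FF x))"
  let ?A = "{S \<in> PCI m m. card S = p} \<times> {S \<in> PCI m m. card S = q}"
  have m01: "0 < m" "1 < m" using m2 by auto
  have gin: "S1 = {x. 0 # x \<in> g (S1, S2)}" "S2 = {x. 1 # x \<in> g (S1, S2)}" for S1 S2
    using glue_in[OF m01(1), where F="FF (S1, S2)"] glue_in[OF m01(2), where F="FF (S1, S2)"] m01
    by (auto simp: g_def FF_def)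
  have inj: "inj_on g ?A"
  proof (rule inj_onI, clarify)
    fix S1 S2 T1 T2 assume eq: "g (S1, S2) = g (T1, T2)"
    have "S1 = {x. 0 # x \<in> g (S1, S2)}" by (rule gin(1))
    also have "\<dots> = {x. 0 # x \<in> g (T1, T2)}" by (simp only: eq)
    also have "\<dots> = T1" by (rule gin(1)[symmetric])
    finally have 1: "S1 = T1" .
    have "S2 = {x. 1 # x \<in> g (S1, S2)}" by (rule gin(2))
    also have "\<dots> = {x. 1 # x \<in> g (T1, T2)}" by (simp only: eq)
    also have "\<dots> = T2" by (rule gin(2)[symmetric])
    finally have 2: "S2 = T2" .
    show "S1 = T1 \<and> S2 = T2" using 1 2 by blast
  qed
  have img: "g ` ?A \<subseteq> {S \<in> PCI m m. card S = p + q + 1}"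
  proof
    fix y assume "y \<in> g ` ?A"
    then obtain S1 S2 where y: "y = g (S1, S2)" and S: "S1 \<in> PCI m m" "card S1 = p" "S2 \<in> PCI m m" "card S2 = q"
      by auto
    define D where "D = max p q"
    have "S1 \<in> PCD m m D" using S card_level_sub[of m m p] PCD_def D_def by fastforce
    moreover have "S2 \<in> PCD m m D" using S card_level_sub[of m m q] PCD_def D_def by fastforce
    ultimately have F: "FF (S1, S2) \<in> PiE {..<m} (\<lambda>_. insert {} (PCD m m D))"
      by (auto simp: FF_def)
    then have "g (S1, S2) \<in> PCD m m (Suc D)" unfolding g_def PCD_decomp by blast
    then have "g (S1, S2) \<in> PCI m m" by (simp add: PCD_def)
    moreover have "card (g (S1, S2)) = p + q + 1"
    proof -
      have fin: "finite (FF (S1, S2) i)" if "i < m" for i using S that by (auto simp: FF_def PCI_def)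
      have "(\<Sum>i<m. card (FF (S1, S2) i)) = (\<Sum>i\<in>{0, 1}. card (FF (S1, S2) i))"
        using m01 by (intro sum.mono_neutral_right) (auto simp: FF_def)
      also have "\<dots> = p + q" using S m01 by (simp add: FF_def)
      finally show ?thesis unfolding g_def using card_glue[of m "FF (S1, S2)"] fin by simp
    qed
    ultimately show "y \<in> {S \<in> PCI m m. card S = p + q + 1}" using y by simp
  qed
  have "card ?A \<le> card {S \<in> PCI m m. card S = p + q + 1}"
    by (rule card_inj_on_le[OF inj img finite_level])
  then show ?thesis by (simp add: Acnt_def card_cartesian_product)
qed

end



lemma upper_ev:
  fixes u :: "nat \<Rightarrow> real"
  assumes u0: "\<And>n. 0 \<le> u n" and ub: "\<And>n. u n \<le> C * L ^ n" and L: "0 < L" and C: "0 < C" and a: "L < a"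
  shows "eventually (\<lambda>n. u n powr (1 / real n) < a) sequentially"
proof -
  have "(\<lambda>n. C powr (1 / real n) * L) \<longlonglongrightarrow> C powr 0 * L"
    by (intro tendsto_intros) (use C in auto)
  then have "(\<lambda>n. C powr (1 / real n) * L) \<longlonglongrightarrow> L" using C by simp
  then have ev: "eventually (\<lambda>n. C powr (1 / real n) * L < a) sequentially"
    using a by (rule order_tendstoD)
  moreover have "eventually (\<lambda>n. n > 0) sequentially" by (rule eventually_gt_at_top)
  ultimately show ?thesis
  proof eventually_elim
    case (elim n)
    have "u n powr (1 / real n) \<le> (C * L ^ n) powr (1 / real n)"
      using u0 ub by (intro powr_mono2) auto
    also have "\<dots> = C powr (1 / real n) * (L ^ n) powr (1 / real n)"
      using C L by (simp add: powr_mult)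
    also have "(L ^ n) powr (1 / real n) = L"
      using L elim(2) by (simp add: powr_realpow[symmetric] powr_powr)
    finally show ?case using elim(1) by simp
  qed
qed

context
  fixes m :: nat
  assumes m2: "m \<ge> 2"
begin

lemma x0_lt1: "x0 m < 1"
proof -
  have "(m - 1) ^ (m - 1) \<le> m ^ (m - 1)" by (intro power_mono) auto
  also have "\<dots> < m ^ m" using m2 by (intro power_strict_increasing) auto
  finally have "real ((m - 1) ^ (m - 1)) < real (m ^ m)" by linarith
  then show ?thesis using m2 by (simp add: x0_def[OF m2] field_simps)
qed

lemma Acnt_iter:
  assumes p: "p \<ge> 1" and s: "s \<ge> 1"
  shows "Acnt m m p ^ t \<le> Acnt m m (t * (p + 1) + s)"
proof (induction t)
  case 0 then show ?case using Acnt_pos[OF m2 s] by simp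
next
  case (Suc t)
  have "Acnt m m p ^ Suc t = Acnt m m p * Acnt m m p ^ t" by simp
  also have "\<dots> \<le> Acnt m m p * Acnt m m (t * (p + 1) + s)" using Suc by simp
  also have "\<dots> \<le> Acnt m m (p + (t * (p + 1) + s) + 1)"
    using s p by (intro Acnt_supermult[OF m2]) auto
  also have "p + (t * (p + 1) + s) + 1 = Suc t * (p + 1) + s" by simp
  finally show ?case .
qed

lemma exists_big:
  assumes c: "0 < c" "c < 1 / x0 m"
  shows "\<exists>n\<ge>1. c ^ (n + 1) < real (Acnt m m n)"
proof (rule ccontr)
  assume "\<not> ?thesis"
  then have A: "\<And>n. n \<ge> 1 \<Longrightarrow> real (Acnt m m n) \<le> c ^ (n + 1)" by (auto simp: not_less)
  have x0p: "x0 m > 0" by (rule x0_pos[OF m2])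
  have cx0: "c * x0 m < 1" using c x0p by (simp add: field_simps)
  define x where "x = (x0 m + 1 / c) / 2"
  have xgt: "x > x0 m" using c x0p cx0 by (simp add: x_def field_simps)
  have cx: "c * x < 1" using c x0p cx0 by (simp add: x_def field_simps)
  have xp: "x > 0" using xgt x0p by simp
  have bound: "(\<Sum>S\<in>PCD m m D. x ^ card S) \<le> c / (1 - c * x)" for D
  proof -
    let ?P = "PCD m m D"
    have "(\<Sum>S\<in>?P. x ^ card S) = (\<Sum>n\<in>card ` ?P. \<Sum>S\<in>{S \<in> ?P. card S = n}. x ^ card S)"
      by (rule sum.image_gen[OF finite_PCD])
    also have "\<dots> = (\<Sum>n\<in>card ` ?P. real (card {S \<in> ?P. card S = n}) * x ^ n)"
      by (intro sum.cong refl) simp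
    also have "\<dots> \<le> (\<Sum>n\<in>card ` ?P. c * (c * x) ^ n)"
    proof (intro sum_mono)
      fix n assume "n \<in> card ` ?P"
      then have n1: "n \<ge> 1" using card_ge1 by (auto simp: PCD_def)
      have "card {S \<in> ?P. card S = n} \<le> Acnt m m n"
        unfolding Acnt_def by (intro card_mono finite_level) (auto simp: PCD_def)
      then have "real (card {S \<in> ?P. card S = n}) * x ^ n \<le> real (Acnt m m n) * x ^ n"
        using xp by (intro mult_right_mono) auto
      also have "\<dots> \<le> c ^ (n + 1) * x ^ n" using A[OF n1] xp by (intro mult_right_mono) auto
      also have "\<dots> = c * (c * x) ^ n" by (simp add: power_mult_distrib)
      finally show "real (card {S \<in> ?P. card S = n}) * x ^ n \<le> c * (c * x) ^ n" .
    qed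
    also have "\<dots> \<le> c / (1 - c * x)"
    proof -
      obtain N where N: "card ` ?P \<subseteq> {..<N}" using finite_nat_bounded[OF finite_imageI[OF finite_PCD]] by blast
      have "(\<Sum>n\<in>card ` ?P. c * (c * x) ^ n) \<le> (\<Sum>n<N. c * (c * x) ^ n)"
        using N c xp by (intro sum_mono2) auto
      also have "\<dots> = c * ((1 - (c * x) ^ N) / (1 - c * x))"
        using cx by (simp add: sum_distrib_left[symmetric] sum_gp_strict)
      also have "\<dots> \<le> c * (1 / (1 - c * x))"
        using cx c xp by (intro mult_left_mono divide_right_mono) auto
      finally show ?thesis by simp
    qed
    finally show ?thesis .
  qed
  obtain D where D: "c / (1 - c * x) / (x - x0 m) < real D" using reals_Archimedean2 by blast
  have "real D * (x - x0 m) \<le> c / (1 - c * x)"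
    using sum_PCD_lower[OF m2 xgt, of D] bound[of D] by simp
  moreover have "c / (1 - c * x) < real D * (x - x0 m)"
  proof -
    have d: "x - x0 m > 0" using xgt by simp
    show ?thesis using D by (simp only: pos_divide_less_eq[OF d])
  qed
  ultimately show False by simp
qed

lemma lower_ev:
  assumes a: "a < 1 / x0 m"
  shows "eventually (\<lambda>N. a < real (Acnt m m N) powr (1 / real N)) sequentially"
proof -
  have x0p: "x0 m > 0" by (rule x0_pos[OF m2])
  have rho1: "1 < 1 / x0 m" using x0_lt1 x0p by simp
  define c where "c = max a ((1 + 1 / x0 m) / 2)"
  have h: "1 < (1 + 1 / x0 m) / 2" "(1 + 1 / x0 m) / 2 < 1 / x0 m" using rho1 by auto
  have c: "1 < c" "c < 1 / x0 m" "a \<le> c" using h a by (auto simp: c_def max_def)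
  obtain p where p: "p \<ge> 1" "c ^ (p + 1) < real (Acnt m m p)" using exists_big[of c] c by auto
  define q where "q = p + 1"
  define A where "A = real (Acnt m m p)"
  have A1: "A \<ge> 1" using Acnt_pos[OF m2 p(1)] by (simp add: A_def)
  define \<beta> where "\<beta> = A powr (1 / real q)"
  have qpos: "real q > 0" by (simp add: q_def)
  have "(c ^ q) powr (1 / real q) = (c powr real q) powr (1 / real q)"
    by (subst powr_realpow) (use c in auto)
  also have "\<dots> = c powr (real q * (1 / real q))" by (rule powr_powr)
  also have "\<dots> = c" using qpos c by simp
  finally have "c = (c ^ q) powr (1 / real q)" by simp
  also have "\<dots> < \<beta>" unfolding \<beta>_def A_def using p c by (intro powr_less_mono2) (auto simp: q_def)
  finally have cb: "c < \<beta>" .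
  have "(\<lambda>N. \<beta> powr (1 - real q * (1 / real N))) \<longlonglongrightarrow> \<beta> powr (1 - real q * 0)"
    using cb c by (intro tendsto_intros) auto
  then have "(\<lambda>N. \<beta> powr (1 - real q * (1 / real N))) \<longlonglongrightarrow> \<beta>" using cb c by simp
  then have ev1: "eventually (\<lambda>N. c < \<beta> powr (1 - real q * (1 / real N))) sequentially"
    using cb by (rule order_tendstoD)
  have ev2: "eventually (\<lambda>N. N \<ge> q) sequentially" by (rule eventually_ge_at_top)
  from ev1 ev2 show ?thesis
  proof eventually_elim
    case (elim N)
    have N0: "N > 0" using elim(2) by (simp add: q_def)
    define t where "t = (N - 1) div q"
    define s where "s = (N - 1) mod q + 1"
    have e: "t * q + (N - 1) mod q = N - 1" unfolding t_def by (rule div_mult_mod_eq)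
    have "N = t * q + s" unfolding s_def using e N0 by linarith
    then have Nts: "N = t * (p + 1) + s" by (simp add: q_def)
    have tq: "real q * real t \<ge> real N - real q"
    proof -
      have "N - 1 = q * t + (N - 1) mod q" by (simp add: t_def)
      moreover have "(N - 1) mod q < q" using q_def by simp
      ultimately have "N \<le> q * t + q" using N0 by linarith
      then have "real N \<le> real (q * t + q)" by (simp only: of_nat_le_iff)
      then show ?thesis by simp
    qed
    have s1: "s \<ge> 1" by (simp add: s_def)
    have "Acnt m m p ^ t \<le> Acnt m m N" using Acnt_iter[OF p(1) s1, of t] by (simp only: Nts[symmetric])
    then have AN: "A ^ t \<le> real (Acnt m m N)" unfolding A_def by (simp only: of_nat_power[symmetric] of_nat_le_iff)
    have "\<beta> powr (1 - real q * (1 / real N)) = A powr ((1 / real q) * (1 - real q * (1 / real N)))"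
      by (simp add: \<beta>_def powr_powr)
    also have "(1 / real q) * (1 - real q * (1 / real N)) \<le> real t / real N"
    proof -
      have "real q > 0" by (simp add: q_def)
      have tq': "real N \<le> real q + real q * real t" using tq by simp
      have k: "real N * real N \<le> real N * real q + real N * (real q * real t)"
        using mult_left_mono[OF tq', of "real N"] by (simp add: algebra_simps)
      then show ?thesis using tq N0 \<open>real q > 0\<close> by (simp add: field_simps)
    qed
    then have "A powr ((1 / real q) * (1 - real q * (1 / real N))) \<le> A powr (real t / real N)"
      using A1 by (intro powr_mono) auto
    also have "A powr (real t / real N) = (A ^ t) powr (1 / real N)"
      using A1 by (simp add: powr_realpow[symmetric] powr_powr)
    also have "\<dots> \<le> real (Acnt m m N) powr (1 / real N)"
      using AN A1 by (intro powr_mono2) auto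
    finally show ?case using elim(1) c(3) by linarith
  qed
qed

lemma Acnt_upper': "real (Acnt j m n) \<le> (x0 m * (1 + y0 m) ^ j) * (1 / x0 m) ^ n"
proof -
  have x0p: "x0 m > 0" by (rule x0_pos[OF m2])
  have "real (Acnt j m n) * x0 m ^ n \<le> x0 m * (1 + y0 m) ^ j" by (rule Acnt_upper[OF m2])
  then show ?thesis using x0p by (simp add: field_simps power_divide)
qed

lemma Acnt_mono: "Acnt m m n \<le> Acnt (Suc m) m n"
proof -
  have "vp (Suc m) m p" if "vp m m p" for p using that by (auto simp: vp_def less_Suc_eq)
  then have "{S \<in> PCI m m. card S = n} \<subseteq> {S \<in> PCI (Suc m) m. card S = n}"
    by (auto simp: PCI_def)
  then show ?thesis unfolding Acnt_def by (intro card_mono finite_level)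
qed

lemma growth_j:
  "(\<lambda>N. real (Acnt (Suc m) m N) powr (1 / real N)) \<longlonglongrightarrow> 1 / x0 m"
proof (rule order_tendstoI)
  have x0p: "x0 m > 0" by (rule x0_pos[OF m2])
  have y0p: "y0 m > 0" using m2 by (simp add: y0_def[OF m2])
  fix a assume "a > 1 / x0 m"
  then show "eventually (\<lambda>N. real (Acnt (Suc m) m N) powr (1 / real N) < a) sequentially"
    using x0p y0p by (intro upper_ev[where C = "x0 m * (1 + y0 m) ^ Suc m" and L = "1 / x0 m"] Acnt_upper') auto
next
  fix a assume a: "a < 1 / x0 m"
  show "eventually (\<lambda>N. a < real (Acnt (Suc m) m N) powr (1 / real N)) sequentially"
    using lower_ev[OF a]
  proof eventually_elim
    case (elim N)
    have "real (Acnt m m N) powr (1 / real N) \<le> real (Acnt (Suc m) m N) powr (1 / real N)"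
      using Acnt_mono by (intro powr_mono2) auto
    then show ?case using elim by linarith
  qed
qed

end



lemma growth_identity:
  assumes r: "r \<ge> 2"
  shows "sqrt (1 / x0 (2 * r - 1)) = idem_growth r"
proof -
  define m where "m = 2 * r - 1"
  have m2: "m \<ge> 2" using r by (simp add: m_def)
  define a where "a = 2 * real r - 1"
  define b where "b = 2 * real r - 2"
  have a: "real m = a" using r by (simp add: m_def a_def of_nat_diff)
  have b: "real (m - 1) = b" using r by (simp add: m_def b_def of_nat_diff)
  have bp: "b > 0" "a > 0" using r by (auto simp: a_def b_def)
  have e1: "m - 1 = 2 * (r - 1)" using r by (simp add: m_def)
  have e2: "m = Suc (2 * (r - 1))" using r by (simp add: m_def)
  have "1 / x0 m = a ^ m / b ^ (m - 1)" unfolding x0_def[OF m2] a b using bp by simp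
  also have "\<dots> = a * ((a / b) ^ (r - 1)) ^ 2"
  proof -
    have pw: "((x::real) ^ 2) ^ n = (x ^ n) ^ 2" for x n by (metis power_mult mult.commute)
    show ?thesis
      unfolding e1 using e2 bp by (simp add: power_mult power_divide pw)
  qed
  finally have "1 / x0 m = a * ((a / b) ^ (r - 1)) ^ 2" .
  then have "sqrt (1 / x0 m) = sqrt a * (a / b) ^ (r - 1)"
    using bp by (simp add: real_sqrt_mult)
  also have "\<dots> = idem_growth r" by (simp add: idem_growth_def a_def b_def)
  finally show ?thesis by (simp add: m_def)
qed

lemma idem_limit:
  assumes r: "r \<ge> 2"
  shows "(\<lambda>k. real (idem_count r (2 * k)) powr (1 / real (2 * k))) \<longlonglongrightarrow> idem_growth r"
proof -
  define m where "m = 2 * r - 1"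
  have m2: "m \<ge> 2" using r by (simp add: m_def)
  have Sm: "Suc m = 2 * r" using r by (simp add: m_def)
  have ic: "idem_count r (2 * k) = Acnt (Suc m) m (Suc k)" for k
    using idem_count_even[of r k] r by (simp add: Acnt_def Sm m_def)
  define h where "h n = real (Acnt (Suc m) m n) powr (1 / real n)" for n
  have hlim: "(\<lambda>k. h (Suc k)) \<longlonglongrightarrow> 1 / x0 m"
    unfolding h_def by (rule LIMSEQ_Suc[OF growth_j[OF m2]])
  have elim: "(\<lambda>k. 1 / 2 + (1 / 2) * (1 / real k)) \<longlonglongrightarrow> 1 / 2 + (1 / 2) * 0"
    by (intro tendsto_intros)
  have x0p: "x0 m > 0" by (rule x0_pos[OF m2])
  have "(\<lambda>k. h (Suc k) powr (1 / 2 + (1 / 2) * (1 / real k))) \<longlonglongrightarrow> (1 / x0 m) powr (1 / 2 + (1 / 2) * 0)"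
    using hlim elim x0p by (intro tendsto_powr) auto
  also have "(1 / x0 m) powr (1 / 2 + (1 / 2) * 0) = sqrt (1 / x0 m)"
    using x0p by (simp add: powr_half_sqrt)
  also have "\<dots> = idem_growth r" using growth_identity[OF r] by (simp add: m_def)
  finally have L: "(\<lambda>k. h (Suc k) powr (1 / 2 + (1 / 2) * (1 / real k))) \<longlonglongrightarrow> idem_growth r" .
  show ?thesis
  proof (rule Lim_transform_eventually[OF L])
    show "eventually (\<lambda>k. h (Suc k) powr (1 / 2 + (1 / 2) * (1 / real k)) = real (idem_count r (2 * k)) powr (1 / real (2 * k))) sequentially"
      using eventually_gt_at_top[of 0]
    proof eventually_elim
      case (elim k)
      have "h (Suc k) powr (1 / 2 + (1 / 2) * (1 / real k)) = real (Acnt (Suc m) m (Suc k)) powr (1 / real (Suc k) * (1 / 2 + (1 / 2) * (1 / real k)))"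
        by (simp add: h_def powr_powr)
      also have "1 / real (Suc k) * (1 / 2 + (1 / 2) * (1 / real k)) = 1 / real (2 * k)"
        using elim by (simp add: field_simps)
      finally show ?case by (simp add: ic)
    qed
  qed
qed

lemma idem_limsup:
  assumes r: "r \<ge> 2"
  shows "limsup (\<lambda>K. ereal (real (idem_count r K) powr (1 / real K))) = ereal (idem_growth r)"
proof -
  define f where "f K = ereal (real (idem_count r K) powr (1 / real K))" for K
  define g where "g k = real (idem_count r (2 * k)) powr (1 / real (2 * k))" for k
  have glim: "g \<longlonglongrightarrow> idem_growth r" unfolding g_def by (rule idem_limit[OF r])
  have fg: "f \<circ> (\<lambda>k. 2 * k) = (\<lambda>k. ereal (g k))" by (auto simp: f_def g_def)
  have "limsup (\<lambda>k. ereal (g k)) = ereal (idem_growth r)"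
    by (rule lim_imp_Limsup) (auto intro: glim)
  moreover have "limsup (f \<circ> (\<lambda>k. 2 * k)) \<le> limsup f"
    by (rule limsup_subseq_mono) (auto simp: strict_mono_def)
  ultimately have ge: "ereal (idem_growth r) \<le> limsup f" using fg by simp
  have div2: "filterlim (\<lambda>K::nat. K div 2) sequentially sequentially"
    unfolding filterlim_at_top
  proof
    fix Z :: nat
    show "eventually (\<lambda>K. Z \<le> K div 2) sequentially"
      using eventually_ge_at_top[of "2 * Z"] by eventually_elim auto
  qed
  have "(\<lambda>K. ereal (g (K div 2))) \<longlonglongrightarrow> ereal (idem_growth r)"
    using filterlim_compose[OF glim div2] by (intro tendsto_intros) (simp add: comp_def)
  then have l2: "limsup (\<lambda>K. ereal (g (K div 2))) = ereal (idem_growth r)"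
    by (rule lim_imp_Limsup[rotated]) simp
  have "f K \<le> ereal (g (K div 2))" for K
  proof (cases "even K")
    case True
    then obtain k where "K = 2 * k" by auto
    then show ?thesis by (simp add: f_def g_def)
  next
    case False
    then obtain k where k: "K = Suc (2 * k)" by (metis oddE Suc_eq_plus1)
    have "g (K div 2) \<ge> 0" by (simp add: g_def)
    then show ?thesis using k by (simp add: f_def idem_count_odd)
  qed
  then have "limsup f \<le> limsup (\<lambda>K. ereal (g (K div 2)))" by (intro Limsup_mono) auto
  then have "limsup f \<le> ereal (idem_growth r)" using l2 by simp
  then show ?thesis using ge unfolding f_def by (rule antisym)
qed

lemma ratio_limit: "(\<lambda>r. idem_growth r / sqrt (exp 1 * (2 * real r - 1))) \<longlonglongrightarrow> 1"
proof -
  have se: "sqrt (exp 1) = exp (1 / 2)"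
    by (rule real_sqrt_unique) (simp_all add: power2_eq_square exp_add[symmetric])
  define a where "a r = (1 + (1 / 2) / real (r - 1)) ^ (r - 1)" for r :: nat
  have "(\<lambda>n. a (Suc n)) \<longlonglongrightarrow> exp (1 / 2)"
    unfolding a_def using tendsto_exp_limit_sequentially[of "1 / 2"] by simp
  then have "a \<longlonglongrightarrow> exp (1 / 2)" by (rule LIMSEQ_imp_Suc)
  then have L: "(\<lambda>r. a r / exp (1 / 2)) \<longlonglongrightarrow> exp (1 / 2) / exp (1 / 2)"
    by (intro tendsto_intros) auto
  show ?thesis
  proof (rule Lim_transform_eventually[OF L[simplified]])
    show "eventually (\<lambda>r. a r / exp (1 / 2) = idem_growth r / sqrt (exp 1 * (2 * real r - 1))) sequentially"
      using eventually_ge_at_top[of 2]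
    proof eventually_elim
      case (elim r)
      have pos: "2 * real r - 1 > 0" using elim by simp
      have q: "(2 * real r - 1) / (2 * real r - 2) = 1 + (1 / 2) / real (r - 1)"
        using elim by (simp add: of_nat_diff field_simps)
      have "idem_growth r / sqrt (exp 1 * (2 * real r - 1)) = ((2 * real r - 1) / (2 * real r - 2)) ^ (r - 1) / sqrt (exp 1)"
        using pos by (simp add: idem_growth_def real_sqrt_mult)
      then show ?case by (simp add: a_def q se)
    qed
  qed
qed

theorem mainTheorem6:
  shows "(\<forall>r::nat. r \<ge> 2 \<longrightarrow>
            limsup (\<lambda>K. ereal (real (idem_count r K) powr (1 / real K))) = ereal (idem_growth r)
          \<and> (\<lambda>k. real (idem_count r (2 * k)) powr (1 / real (2 * k))) \<longlonglongrightarrow> idem_growth r)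
       \<and> (\<lambda>r. idem_growth r / sqrt (exp 1 * (2 * real r - 1))) \<longlonglongrightarrow> 1"
  using idem_limsup idem_limit ratio_limit by blast


end
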